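(* Let $n\geq1$, $d\geq 2$, and let $F\in\mathcal{P}_{n,d+1}$ with $F(0)=0$, written as $F=\sum_{c=1}^{d+1}F_c$ with $F_c=((F_c)_1,\dots,(F_c)_n)$ homogeneous of degree $c$. Define $\tilde F:\mathbb{C}^n\times\mathbb{C}^{n\times n}\to\mathbb{C}^n\times\mathbb{C}^{n\times n}$, with variables $z^{(1)}=(z^{(1)}_i)_{1\le i\le n}$ and $z^{(2)}=(z^{(2)}_{ij})_{1\le i,j\le n}$, by $$\tilde F^{(1)}_i(z^{(1)},z^{(2)})=\sum_{j=1}^n z^{(2)}_{ij}z^{(1)}_j,\qquad \tilde F^{(2)}_{ij}(z^{(1)},z^{(2)})=z^{(2)}_{ij}-\sum_{c=1}^{d+1}\frac1c\,\frac{\partial (F_c)_i}{\partial z^{(1)}_j}(z^{(1)}).$$ Then $\tilde F\in\mathcal{P}_{n(n+1),d}$; the map $R(z^{(2)};z^{(1)}):=\tilde F^{(2)}(z^{(1)},z^{(2)})$ is, for each $z^{(1)}$, an invertible translation in $z^{(2)}$ with inverse $R^{-1}(y^{(2)};z^{(1)})_{ij}=y^{(2)}_{ij}+\sum_c\frac1c\frac{\partial (F_c)_i}{\partial z^{(1)}_j}(z^{(1)})$; and $$\tilde F^{(1)}\big(z^{(1)},R^{-1}(0;z^{(1)})\big)=F(z^{(1)})\quad\text{for all }z^{(1)}\in\mathbb{C}^n.$$ Consequently $F\in\mathcal{J}^{\rm lin}_{n}$ if and only if $\tilde F\in\mathcal{J}^{\rm lin}_{n(n+1),d;n}$, and $F\in\mathcal{J}_{n}$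 if and only if $\tilde F\in\mathcal{J}_{n(n+1),d;n}$.
   Context: $\mathcal{P}_{m,d}$ is the set of polynomial maps $\mathbb{C}^m\to\mathbb{C}^m$ of total degree $\le d$; $J_F(z)=(\partial F_j/\partial z_i)_{i,j}$. $\mathcal{J}^{\rm lin}_n$: polynomial maps $\mathbb{C}^n\to\mathbb{C}^n$ with $\det J_F$ a nonzero constant; $\mathcal{J}_n$: polynomial maps $\mathbb{C}^n\to\mathbb{C}^n$ that are bijective with polynomial inverse. For $0\le n'\le m$, split $z=(z_1,z_2)\in\mathbb{C}^{n'}\times\mathbb{C}^{m-n'}$, $F=(F_1,F_2)$, $R(z_2;z_1):=F_2(z_1,z_2)$, and when $R(\cdot;z_1)$ is invertible write $R^{-1}(\cdot;z_1)$ for its inverse. $\mathcal{J}^{\rm lin}_{m,d;n'}$ is the set of $F\in\mathcal{P}_{m,d}$ with $R(\cdot;z_1)\in\mathcal{J}_{m-n'}$ for all $z_1$ and $\det J_F(z_1,R^{-1}(0;z_1))=c\in\mathbb{C}^\times$ constant in $z_1$. $\mathcal{J}_{m,d;n'}$ is the set of $F\in\mathcal{P}_{m,d}$ with $R(\cdot;z_1)\in\mathcal{J}_{m-n'}$ for all $z_1$ and such that $F$ restricted to $F^{-1}(\mathbb{C}^{n'}\times\{0\})$ is a bijection onto $\mathbb{C}^{n'}\times\{0\}$ whose inverse $y_1\mapsto F^{-1}(y_1,0)$ is a polynomial map. Here $m=n(n+1)$ and $n'=n$, the first block being $z^{(1)}$ and the second $z^{(2)}$ (identified with $\mathbb{C}^{n^2}$).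 *)

theory Defs
  imports "HOL-Analysis.Analysis"
begin

text \<open>Points of C^m are functions 'a => complex for a finite index type 'a with
  CARD('a) = m.  The space C^{n'} x C^{m-n'} is indexed by the sum type 'a + 'b.\<close>

definition poly_fun :: "nat \<Rightarrow> (('a::finite \<Rightarrow> complex) \<Rightarrow> complex) \<Rightarrow> bool" where
  "poly_fun d p \<longleftrightarrow> (\<exists>coef :: ('a \<Rightarrow> nat) \<Rightarrow> complex. \<forall>z.
      p z = (\<Sum>\<alpha>\<in>{\<alpha>. sum \<alpha> UNIV \<le> d}. coef \<alpha> * (\<Prod>i\<in>UNIV. z i ^ \<alpha> i)))"

definition hom_poly :: "nat \<Rightarrow> (('a::finite \<Rightarrow> complex) \<Rightarrow> complex) \<Rightarrow> bool" where
  "hom_poly c p \<longleftrightarrow> (\<exists>coef :: ('a \<Rightarrow> nat) \<Rightarrow> complex. \<forall>z.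
      p z = (\<Sum>\<alpha>\<in>{\<alpha>. sum \<alpha> UNIV = c}. coef \<alpha> * (\<Prod>i\<in>UNIV. z i ^ \<alpha> i)))"

definition poly_map :: "nat \<Rightarrow> (('a::finite \<Rightarrow> complex) \<Rightarrow> ('c \<Rightarrow> complex)) \<Rightarrow> bool" where
  "poly_map d G \<longleftrightarrow> (\<forall>j. poly_fun d (\<lambda>z. G z j))"

definition polynomial_map :: "(('a::finite \<Rightarrow> complex) \<Rightarrow> ('c \<Rightarrow> complex)) \<Rightarrow> bool" where
  "polynomial_map G \<longleftrightarrow> (\<exists>d. poly_map d G)"

definition partial :: "(('a \<Rightarrow> complex) \<Rightarrow> complex) \<Rightarrow> 'a \<Rightarrow> ('a \<Rightarrow> complex) \<Rightarrow> complex" where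
  "partial f i z = deriv (\<lambda>t. f (z(i := t))) (z i)"

definition jac :: "(('a::finite \<Rightarrow> complex) \<Rightarrow> ('a \<Rightarrow> complex)) \<Rightarrow> ('a \<Rightarrow> complex) \<Rightarrow> complex^'a^'a" where
  "jac F z = (\<chi> i j. partial (\<lambda>w. F w j) i z)"

definition jac_det :: "(('a::finite \<Rightarrow> complex) \<Rightarrow> ('a \<Rightarrow> complex)) \<Rightarrow> ('a \<Rightarrow> complex) \<Rightarrow> complex" where
  "jac_det F z = det (jac F z)"

definition isJlin :: "(('a::finite \<Rightarrow> complex) \<Rightarrow> ('a \<Rightarrow> complex)) \<Rightarrow> bool" where
  "isJlin F \<longleftrightarrow> polynomial_map F \<and> (\<exists>c. c \<noteq> 0 \<and> (\<forall>z. jac_det F z = c))"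

definition isJ :: "(('a::finite \<Rightarrow> complex) \<Rightarrow> ('a \<Rightarrow> complex)) \<Rightarrow> bool" where
  "isJ F \<longleftrightarrow> polynomial_map F \<and> bij F \<and> polynomial_map (inv F)"

definition blk_R :: "((('a + 'b) \<Rightarrow> complex) \<Rightarrow> (('a + 'b) \<Rightarrow> complex))
    \<Rightarrow> ('a \<Rightarrow> complex) \<Rightarrow> ('b \<Rightarrow> complex) \<Rightarrow> ('b \<Rightarrow> complex)" where
  "blk_R F z1 z2 = (\<lambda>b. F (case_sum z1 z2) (Inr b))"

definition isJlin_blk :: "nat \<Rightarrow> ((('a::finite + 'b::finite) \<Rightarrow> complex) \<Rightarrow> (('a + 'b) \<Rightarrow> complex)) \<Rightarrow> bool" where
  "isJlin_blk d F \<longleftrightarrow> poly_map d F \<and> (\<forall>z1. isJ (blk_R F z1)) \<and>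
     (\<exists>c. c \<noteq> 0 \<and> (\<forall>z1. jac_det F (case_sum z1 (inv (blk_R F z1) (\<lambda>_. 0))) = c))"

definition isJ_blk :: "nat \<Rightarrow> ((('a::finite + 'b::finite) \<Rightarrow> complex) \<Rightarrow> (('a + 'b) \<Rightarrow> complex)) \<Rightarrow> bool" where
  "isJ_blk d F \<longleftrightarrow> poly_map d F \<and> (\<forall>z1. isJ (blk_R F z1)) \<and>
     (let S = {y. \<forall>b. y (Inr b) = 0} in
       bij_betw F (F -` S) S \<and>
       (\<exists>G :: ('a \<Rightarrow> complex) \<Rightarrow> (('a + 'b) \<Rightarrow> complex). polynomial_map G \<and>
          (\<forall>y1. F (G y1) = case_sum y1 (\<lambda>_. 0))))"

definition Ftilde :: "nat \<Rightarrow> (nat \<Rightarrow> ('n::finite \<Rightarrow> complex) \<Rightarrow> ('n \<Rightarrow> complex))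
    \<Rightarrow> (('n + 'n \<times> 'n) \<Rightarrow> complex) \<Rightarrow> (('n + 'n \<times> 'n) \<Rightarrow> complex)" where
  "Ftilde d Fc z = (\<lambda>k. case k of
      Inl i \<Rightarrow> (\<Sum>j\<in>UNIV. z (Inr (i, j)) * z (Inl j))
    | Inr (i, j) \<Rightarrow> z (Inr (i, j)) - (\<Sum>c\<in>{1..d+1}. (1 / of_nat c) *
          partial (\<lambda>x. Fc c x i) j (\<lambda>l. z (Inl l))))"

definition Rinv :: "nat \<Rightarrow> (nat \<Rightarrow> ('n::finite \<Rightarrow> complex) \<Rightarrow> ('n \<Rightarrow> complex))
    \<Rightarrow> ('n \<Rightarrow> complex) \<Rightarrow> ('n \<times> 'n \<Rightarrow> complex) \<Rightarrow> ('n \<times> 'n \<Rightarrow> complex)" where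
  "Rinv d Fc z1 y2 = (\<lambda>(i, j). y2 (i, j) + (\<Sum>c\<in>{1..d+1}. (1 / of_nat c) *
          partial (\<lambda>x. Fc c x i) j z1))"

end

theory Submission
  imports Defs
begin


lemma map_sum_transpose:
  "map_sum (Transposition.transpose a b \<circ> p) id = Transposition.transpose (Inl a) (Inl b) \<circ> map_sum p id"
  by (rule ext, case_tac x) (auto simp: Transposition.transpose_def)


lemma map_sum_permutes:
  assumes "q permutes (UNIV::'n set)"
  shows "map_sum q (id::'m\<Rightarrow>'m) permutes UNIV"
proof -
  have b: "bij q" using assms permutes_bij by blast
  have i1: "map_sum (inv q) id \<circ> map_sum q (id::'m\<Rightarrow>'m) = id"
  proof
    fix x :: "'n + 'm" show "(map_sum (inv q) id \<circ> map_sum q id) x = id x"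
      using b by (cases x) (simp_all add: bij_is_inj)
  qed
  have i2: "map_sum q id \<circ> map_sum (inv q) (id::'m\<Rightarrow>'m) = id"
  proof
    fix x :: "'n + 'm" show "(map_sum q id \<circ> map_sum (inv q) id) x = id x"
      using b by (cases x) (simp_all add: bij_is_surj surj_f_inv_f)
  qed
  have "bij (map_sum q (id::'m\<Rightarrow>'m))" using o_bij[OF i1 i2] .
  then show ?thesis by (rule bij_imp_permutes) simp
qed

lemma sign_map_sum:
  fixes q :: "'n::finite \<Rightarrow> 'n"
  assumes "q permutes UNIV"
  shows "sign (map_sum q (id::'m::finite\<Rightarrow>'m)) = sign q"
  using assms finite[of "UNIV::'n set"]
proof (induction rule: permutes_induct)
  case id
  have "map_sum (id::'n\<Rightarrow>'n) (id::'m\<Rightarrow>'m) = id" by (rule sum.map_id0)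
  then show ?case by (simp only: sign_id)
next
  case (swap a b p)
  have pp: "permutation p" unfolding permutation_permutes using \<open>p permutes UNIV\<close> by (intro exI[of _ UNIV]) simp
  have pp2: "permutation (map_sum p (id::'m\<Rightarrow>'m))"
    unfolding permutation_permutes using map_sum_permutes[OF \<open>p permutes UNIV\<close>] by (intro exI[of _ UNIV]) simp
  have "sign (map_sum (Transposition.transpose a b \<circ> p) (id::'m\<Rightarrow>'m))
     = sign (Transposition.transpose (Inl a) (Inl b :: 'n + 'm)) * sign (map_sum p (id::'m\<Rightarrow>'m))"
    unfolding map_sum_transpose by (rule sign_compose[OF permutation_swap_id pp2])
  also have "\<dots> = sign (Transposition.transpose a b) * sign p"
    using swap by (simp add: sign_swap_id id_def)
  also have "\<dots> = sign (Transposition.transpose a b \<circ> p)"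
    by (rule sign_compose[OF permutation_swap_id pp, symmetric])
  finally show ?case .
qed

lemma det_block:
  fixes M :: "'a::comm_ring_1^('n::finite+'m::finite)^('n+'m)"
  assumes M: "\<And>b k. M $ Inr b $ k = (if k = Inr b then 1 else 0)"
  shows "det M = det (\<chi> a a'. M $ Inl a $ Inl a')"
proof -
  define P where "P = {p. p permutes (UNIV::('n+'m) set)}"
  define Q where "Q = {p\<in>P. \<forall>b. p (Inr b) = Inr b}"
  define t where "t p = of_int (sign p) * (\<Prod>i\<in>UNIV. M$i$p i)" for p
  have "det M = sum t P" unfolding det_def P_def t_def by simp
  also have "\<dots> = sum t Q"
  proof (rule sum.mono_neutral_right)
    show "finite P" unfolding P_def by simp
    show "Q \<subseteq> P" unfolding Q_def by auto
    show "\<forall>p\<in>P - Q. t p = 0"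
    proof
      fix p assume "p \<in> P - Q"
      then obtain b where "p (Inr b) \<noteq> Inr b" unfolding Q_def by auto
      then have "M $ Inr b $ p (Inr b) = 0" using M by simp
      then have "(\<Prod>i\<in>UNIV. M$i$p i) = 0" by (intro prod_zero) auto
      then show "t p = 0" unfolding t_def by simp
    qed
  qed
  also have "Q = (\<lambda>q. map_sum q id) ` {q. q permutes (UNIV::'n set)}"
  proof
    show "(\<lambda>q. map_sum q id) ` {q. q permutes (UNIV::'n set)} \<subseteq> Q"
      unfolding Q_def P_def using map_sum_permutes by auto
    show "Q \<subseteq> (\<lambda>q. map_sum q id) ` {q. q permutes (UNIV::'n set)}"
    proof
      fix p assume pQ: "p \<in> Q"
      then have pp: "p permutes UNIV" and fx: "\<And>b. p (Inr b) = Inr b"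
        unfolding Q_def P_def by auto
      have injp: "inj p" using pp permutes_inj by blast
      have isl: "\<exists>c. p (Inl a) = Inl c" for a
      proof (cases "p (Inl a)")
        case (Inr b)
        then have "p (Inl a) = p (Inr b)" using fx by simp
        then show ?thesis using injp by (simp add: inj_eq)
      qed auto
      define q where "q a = projl (p (Inl a))" for a
      have pq: "p (Inl a) = Inl (q a)" for a using isl[of a] unfolding q_def by auto
      have peq: "p = map_sum q id"
      proof
        fix x show "p x = map_sum q id x" by (cases x) (simp_all add: pq fx)
      qed
      have "inj q"
      proof (rule injI)
        fix a a' assume "q a = q a'"
        then have "p (Inl a) = p (Inl a')" by (simp add: pq)
        then show "a = a'" using injp by (simp add: inj_eq)
      qed
      then have "bij q" using finite_UNIV_inj_surj[of q] by (simp add: bij_def)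
      then have "q permutes UNIV" by (rule bij_imp_permutes) simp
      then show "p \<in> (\<lambda>q. map_sum q id) ` {q. q permutes (UNIV::'n set)}"
        using peq by blast
    qed
  qed
  also have "sum t \<dots> = sum (t \<circ> (\<lambda>q. map_sum q id)) {q. q permutes (UNIV::'n set)}"
  proof (rule sum.reindex)
    show "inj_on (\<lambda>q. map_sum q (id::'m\<Rightarrow>'m)) {q. q permutes (UNIV::'n set)}"
    proof (rule inj_onI)
      fix q q' :: "'n \<Rightarrow> 'n" assume "map_sum q (id::'m\<Rightarrow>'m) = map_sum q' id"
      then have "\<And>a. map_sum q (id::'m\<Rightarrow>'m) (Inl a) = map_sum q' id (Inl a)" by simp
      then show "q = q'" by auto
    qed
  qed
  also have "\<dots> = sum (\<lambda>q. of_int (sign q) * (\<Prod>a\<in>UNIV. (\<chi> a a'. M $ Inl a $ Inl a') $ a $ q a))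
     {q. q permutes (UNIV::'n set)}"
  proof (rule sum.cong[OF refl])
    fix q :: "'n \<Rightarrow> 'n" assume "q \<in> {q. q permutes UNIV}"
    then have qp: "q permutes UNIV" by simp
    have "(\<Prod>i\<in>(UNIV::('n+'m) set). M$i$map_sum q id i)
       = (\<Prod>i\<in>(UNIV <+> UNIV). M$i$map_sum q id i)" by simp
    also have "\<dots> = (\<Prod>a\<in>UNIV. M $ Inl a $ Inl (q a)) * (\<Prod>b\<in>UNIV. M $ Inr b $ Inr b)"
      by (subst prod.Plus) (simp_all add: o_def)
    also have "\<dots> = (\<Prod>a\<in>UNIV. (\<chi> a a'. M $ Inl a $ Inl a') $ a $ q a)"
      using M by simp
    finally show "(t \<circ> (\<lambda>q. map_sum q id)) q = of_int (sign q) * (\<Prod>a\<in>UNIV. (\<chi> a a'. M $ Inl a $ Inl a') $ a $ q a)"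
      unfolding t_def o_def sign_map_sum[OF qp] by simp
  qed
  also have "\<dots> = det (\<chi> a a'. M $ Inl a $ Inl a')" unfolding det_def by simp
  finally show ?thesis .
qed


definition mon :: "('a::finite \<Rightarrow> nat) \<Rightarrow> ('a \<Rightarrow> complex) \<Rightarrow> complex" where
  "mon \<alpha> z = (\<Prod>i\<in>UNIV. z i ^ \<alpha> i)"

lemma finite_deg: "finite {\<alpha>::'a::finite\<Rightarrow>nat. sum \<alpha> UNIV \<le> d}"
proof (rule finite_subset)
  show "{\<alpha>::'a\<Rightarrow>nat. sum \<alpha> UNIV \<le> d} \<subseteq> Pi\<^sub>E UNIV (\<lambda>_. {..d})"
    unfolding PiE_UNIV_domain
  proof
    fix \<alpha> :: "'a \<Rightarrow> nat" assume "\<alpha> \<in> {\<alpha>. sum \<alpha> UNIV \<le> d}"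
    then have "\<alpha> i \<le> d" for i using member_le_sum[of i UNIV \<alpha>] by simp
    then show "\<alpha> \<in> Pi UNIV (\<lambda>_. {..d})" by auto
  qed
  show "finite (Pi\<^sub>E (UNIV::'a set) (\<lambda>_. {..d}))" by (rule finite_PiE) auto
qed

lemma poly_fun_E:
  assumes "poly_fun d p"
  obtains coef where "\<And>z. p z = (\<Sum>\<alpha>\<in>{\<alpha>. sum \<alpha> UNIV \<le> d}. coef \<alpha> * mon \<alpha> z)"
  using assms unfolding poly_fun_def mon_def by blast

lemma poly_fun_lincomb:
  fixes g :: "'k \<Rightarrow> ('a::finite \<Rightarrow> nat)"
  assumes K: "finite K" and deg: "\<forall>k\<in>K. sum (g k) UNIV \<le> d"
    and p: "\<And>z. p z = (\<Sum>k\<in>K. c k * mon (g k) z)"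
  shows "poly_fun d p"
  unfolding poly_fun_def
proof (intro exI allI)
  fix z
  let ?D = "{\<alpha>::'a\<Rightarrow>nat. sum \<alpha> UNIV \<le> d}"
  have "(\<Sum>\<alpha>\<in>?D. (\<Sum>k\<in>{k\<in>K. g k = \<alpha>}. c k) * (\<Prod>i\<in>UNIV. z i ^ \<alpha> i))
      = (\<Sum>\<alpha>\<in>?D. (\<Sum>k\<in>{k\<in>K. g k = \<alpha>}. c k * mon (g k) z))"
    unfolding sum_distrib_right mon_def by (intro sum.cong refl) auto
  also have "\<dots> = (\<Sum>k\<in>K. c k * mon (g k) z)"
    by (rule sum.group[OF K finite_deg]) (use deg in auto)
  finally show "p z = (\<Sum>\<alpha>\<in>?D. (\<Sum>k\<in>{k\<in>K. g k = \<alpha>}. c k) * (\<Prod>i\<in>UNIV. z i ^ \<alpha> i))"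
    using p by simp
qed

lemma poly_fun_mono:
  assumes "d \<le> d'" "poly_fun d p" shows "poly_fun d' p"
proof -
  obtain coef where p: "\<And>z. p z = (\<Sum>\<alpha>\<in>{\<alpha>. sum \<alpha> UNIV \<le> d}. coef \<alpha> * mon \<alpha> z)"
    using poly_fun_E[OF assms(2)] by blast
  show ?thesis by (rule poly_fun_lincomb[OF finite_deg _ p]) (use assms(1) in auto)
qed

lemma hom_poly_E:
  assumes "hom_poly c p"
  obtains coef where "\<And>z. p z = (\<Sum>\<alpha>\<in>{\<alpha>. sum \<alpha> UNIV = c}. coef \<alpha> * mon \<alpha> z)"
  using assms unfolding hom_poly_def mon_def by blast

lemma finite_hdeg: "finite {\<alpha>::'a::finite\<Rightarrow>nat. sum \<alpha> UNIV = c}"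
  by (rule finite_subset[OF _ finite_deg[of c]]) auto

lemma hom_poly_fun:
  assumes "hom_poly c p" shows "poly_fun c p"
proof -
  obtain coef where p: "\<And>z. p z = (\<Sum>\<alpha>\<in>{\<alpha>. sum \<alpha> UNIV = c}. coef \<alpha> * mon \<alpha> z)"
    using hom_poly_E[OF assms] by blast
  show ?thesis by (rule poly_fun_lincomb[OF finite_hdeg _ p]) auto
qed

lemma poly_fun_const: "poly_fun d (\<lambda>z. a)"
  by (rule poly_fun_lincomb[where K="{()}" and g="\<lambda>_. \<lambda>_. 0" and c="\<lambda>_. a"])
     (auto simp: mon_def)

lemma poly_fun_var: "poly_fun 1 (\<lambda>z. z i)"
proof (rule poly_fun_lincomb[where K="{()}" and g="\<lambda>_. \<lambda>j. if j = i then 1 else 0" and c="\<lambda>_. 1"])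
  fix z :: "'a \<Rightarrow> complex"
  have "mon (\<lambda>j. if j = i then 1 else 0) z = (\<Prod>j\<in>UNIV. if j = i then z j else 1)"
    unfolding mon_def by (intro prod.cong) auto
  also have "\<dots> = z i" by simp
  finally show "z i = (\<Sum>k\<in>{()}. 1 * mon (\<lambda>j. if j = i then 1 else 0) z)" by simp
qed auto

lemma poly_fun_add:
  assumes "poly_fun d p" "poly_fun d q" shows "poly_fun d (\<lambda>z. p z + q z)"
proof -
  obtain a where p: "\<And>z. p z = (\<Sum>\<alpha>\<in>{\<alpha>. sum \<alpha> UNIV \<le> d}. a \<alpha> * mon \<alpha> z)"
    using poly_fun_E[OF assms(1)] by blast
  obtain b where q: "\<And>z. q z = (\<Sum>\<alpha>\<in>{\<alpha>. sum \<alpha> UNIV \<le> d}. b \<alpha> * mon \<alpha> z)"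
    using poly_fun_E[OF assms(2)] by blast
  show ?thesis
    by (rule poly_fun_lincomb[OF finite_deg, where c="\<lambda>\<alpha>. a \<alpha> + b \<alpha>" and g=id])
       (auto simp: p q distrib_right sum.distrib)
qed

lemma mon_add: "mon (\<lambda>i. \<alpha> i + \<beta> i) z = mon \<alpha> z * mon \<beta> z"
  unfolding mon_def by (simp add: power_add prod.distrib)

lemma poly_fun_mult:
  assumes "poly_fun d p" "poly_fun e q" shows "poly_fun (d + e) (\<lambda>z. p z * q z)"
proof -
  obtain a where p: "\<And>z. p z = (\<Sum>\<alpha>\<in>{\<alpha>. sum \<alpha> UNIV \<le> d}. a \<alpha> * mon \<alpha> z)"
    using poly_fun_E[OF assms(1)] by blast
  obtain b where q: "\<And>z. q z = (\<Sum>\<alpha>\<in>{\<alpha>. sum \<alpha> UNIV \<le> e}. b \<alpha> * mon \<alpha> z)"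
    using poly_fun_E[OF assms(2)] by blast
  define K where "K = {\<alpha>::'a\<Rightarrow>nat. sum \<alpha> UNIV \<le> d} \<times> {\<alpha>::'a\<Rightarrow>nat. sum \<alpha> UNIV \<le> e}"
  define g where "g k = (\<lambda>i. fst k i + snd k i)" for k :: "('a\<Rightarrow>nat) \<times> ('a\<Rightarrow>nat)"
  define c where "c k = a (fst k) * b (snd k)" for k :: "('a\<Rightarrow>nat) \<times> ('a\<Rightarrow>nat)"
  have fK: "finite K" unfolding K_def using finite_deg by (intro finite_cartesian_product)
  have dK: "\<forall>k\<in>K. sum (g k) UNIV \<le> d + e"
  proof
    fix k assume "k \<in> K"
    then have "sum (fst k) UNIV \<le> d" "sum (snd k) UNIV \<le> e" unfolding K_def by auto
    then show "sum (g k) UNIV \<le> d + e" unfolding g_def by (simp add: sum.distrib)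
  qed
  have eq: "p z * q z = (\<Sum>k\<in>K. c k * mon (g k) z)" for z
  proof -
    have "p z * q z = (\<Sum>x\<in>{\<alpha>. sum \<alpha> UNIV \<le> d}. \<Sum>y\<in>{\<alpha>. sum \<alpha> UNIV \<le> e}. (a x * mon x z) * (b y * mon y z))"
      unfolding p q by (rule sum_product)
    also have "\<dots> = (\<Sum>k\<in>K. (a (fst k) * mon (fst k) z) * (b (snd k) * mon (snd k) z))"
      unfolding K_def by (subst sum.cartesian_product) (simp add: case_prod_beta)
    also have "\<dots> = (\<Sum>k\<in>K. c k * mon (g k) z)"
      unfolding c_def g_def mon_add by (simp add: ac_simps)
    finally show ?thesis .
  qed
  show ?thesis by (rule poly_fun_lincomb[OF fK dK eq])
qed

lemma poly_fun_sum:
  assumes "finite I" "\<forall>i\<in>I. poly_fun d (f i)" shows "poly_fun d (\<lambda>z. \<Sum>i\<in>I. f i z)"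
  using assms by (induction I rule: finite_induct) (auto intro: poly_fun_const poly_fun_add)

lemma poly_fun_prod:
  assumes "finite I" "\<forall>i\<in>I. poly_fun (e i) (f i)" shows "poly_fun (sum e I) (\<lambda>z. \<Prod>i\<in>I. f i z)"
  using assms by (induction I rule: finite_induct) (auto intro: poly_fun_const poly_fun_mult)

lemma poly_fun_pow:
  assumes "poly_fun b q" shows "poly_fun (n * b) (\<lambda>z. q z ^ n)"
  using poly_fun_prod[of "{..<n}" "\<lambda>_. b" "\<lambda>_. q"] assms by simp

lemma poly_fun_scale:
  assumes "poly_fun d p" shows "poly_fun d (\<lambda>z. c * p z)"
  using poly_fun_mult[OF poly_fun_const assms, of 0 c] by simp

lemma poly_fun_diff:
  assumes "poly_fun d p" "poly_fun d q" shows "poly_fun d (\<lambda>z. p z - q z)"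
  using poly_fun_add[OF assms(1) poly_fun_scale[OF assms(2), of "-1"]] by simp

lemma poly_fun_compose:
  assumes p: "poly_fun a p" and q: "\<forall>l. poly_fun b (q l)"
  shows "poly_fun (a * b) (\<lambda>z. p (\<lambda>l. q l z))"
proof -
  obtain coef where pe: "\<And>z. p z = (\<Sum>\<alpha>\<in>{\<alpha>. sum \<alpha> UNIV \<le> a}. coef \<alpha> * mon \<alpha> z)"
    using poly_fun_E[OF p] by blast
  have m: "poly_fun (a * b) (\<lambda>z. coef \<alpha> * mon \<alpha> (\<lambda>l. q l z))" if "sum \<alpha> UNIV \<le> a" for \<alpha>
  proof -
    have "poly_fun (\<Sum>l\<in>UNIV. \<alpha> l * b) (\<lambda>z. \<Prod>l\<in>UNIV. q l z ^ \<alpha> l)"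
      by (rule poly_fun_prod) (auto intro: poly_fun_pow q[rule_format])
    moreover have "(\<Sum>l\<in>UNIV. \<alpha> l * b) \<le> a * b"
      using that by (simp add: sum_distrib_right[symmetric])
    ultimately have "poly_fun (a * b) (\<lambda>z. \<Prod>l\<in>UNIV. q l z ^ \<alpha> l)"
      using poly_fun_mono by blast
    then show ?thesis unfolding mon_def by (rule poly_fun_scale)
  qed
  show ?thesis unfolding pe
    by (rule poly_fun_sum[OF finite_deg]) (use m in auto)
qed



lemma mon_split: "mon \<alpha> z = z j ^ \<alpha> j * (\<Prod>i\<in>UNIV-{j}. z i ^ \<alpha> i)"
  unfolding mon_def by (rule prod.remove) auto

lemma mon_upd: "mon (\<alpha>(j:=n)) (z(j:=t)) = t ^ n * (\<Prod>i\<in>UNIV-{j}. z i ^ \<alpha> i)"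
proof -
  have "mon (\<alpha>(j:=n)) (z(j:=t)) = t ^ n * (\<Prod>i\<in>UNIV-{j}. (z(j:=t)) i ^ (\<alpha>(j:=n)) i)"
    using mon_split[of "\<alpha>(j:=n)" "z(j:=t)" j] by simp
  also have "(\<Prod>i\<in>UNIV-{j}. (z(j:=t)) i ^ (\<alpha>(j:=n)) i) = (\<Prod>i\<in>UNIV-{j}. z i ^ \<alpha> i)"
    by (rule prod.cong) auto
  finally show ?thesis .
qed

lemma mon_upd2: "mon (\<alpha>(j:=n)) z = z j ^ n * (\<Prod>i\<in>UNIV-{j}. z i ^ \<alpha> i)"
  using mon_upd[of \<alpha> j n z "z j"] by simp

lemma mon_deriv:
  "((\<lambda>t. mon \<alpha> (z(j:=t))) has_field_derivative (of_nat (\<alpha> j) * mon (\<alpha>(j:=\<alpha> j - 1)) (z(j:=t)))) (at t)"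
proof -
  define R where "R = (\<Prod>i\<in>UNIV-{j}. z i ^ \<alpha> i)"
  have e1: "mon \<alpha> (z(j:=s)) = s ^ \<alpha> j * R" for s
    using mon_upd[of \<alpha> j "\<alpha> j" z s] unfolding R_def by simp
  have e2: "mon (\<alpha>(j:=\<alpha> j - 1)) (z(j:=t)) = t ^ (\<alpha> j - 1) * R"
    using mon_upd[of \<alpha> j "\<alpha> j - 1" z t] unfolding R_def by simp
  have "((\<lambda>s. s ^ \<alpha> j * R) has_field_derivative (of_nat (\<alpha> j) * (1 * t ^ (\<alpha> j - Suc 0))) * R) (at t)"
    by (intro DERIV_cmult_right DERIV_power DERIV_ident)
  then show ?thesis unfolding e1 e2 by (simp add: ac_simps)
qed

lemma poly_rep_deriv:
  assumes p: "\<And>z. p z = (\<Sum>\<alpha>\<in>S. coef \<alpha> * mon \<alpha> z)"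
  shows "((\<lambda>t. p (z(j:=t))) has_field_derivative
     (\<Sum>\<alpha>\<in>S. coef \<alpha> * (of_nat (\<alpha> j) * mon (\<alpha>(j:=\<alpha> j - 1)) (z(j:=t))))) (at t)"
  unfolding p by (intro DERIV_sum DERIV_cmult mon_deriv)

lemma partial_eqI:
  assumes "((\<lambda>t. f (z(k:=t))) has_field_derivative v) (at (z k))"
  shows "partial f k z = v"
  unfolding partial_def using assms by (rule DERIV_imp_deriv)

lemma poly_rep_partial:
  assumes p: "\<And>z. p z = (\<Sum>\<alpha>\<in>S. coef \<alpha> * mon \<alpha> z)"
  shows "partial p j z = (\<Sum>\<alpha>\<in>S. coef \<alpha> * (of_nat (\<alpha> j) * mon (\<alpha>(j:=\<alpha> j - 1)) z))"
  using partial_eqI[OF poly_rep_deriv[OF p, of z j "z j"]] by simp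

lemma poly_fun_deriv:
  assumes "poly_fun d p"
  shows "((\<lambda>t. p (z(j:=t))) has_field_derivative partial p j (z(j:=t))) (at t)"
proof -
  obtain coef where p: "\<And>z. p z = (\<Sum>\<alpha>\<in>{\<alpha>. sum \<alpha> UNIV \<le> d}. coef \<alpha> * mon \<alpha> z)"
    using poly_fun_E[OF assms] by blast
  show ?thesis
    using poly_rep_deriv[OF p, of z j t] poly_rep_partial[OF p, of j "z(j:=t)"] by simp
qed

lemma sum_upd: "sum ((\<alpha>::'a::finite\<Rightarrow>nat)(j:=n)) UNIV + \<alpha> j = sum \<alpha> UNIV + (n::nat)"
proof -
  have a: "sum \<alpha> UNIV = \<alpha> j + sum \<alpha> (UNIV - {j})" by (rule sum.remove) auto
  have b: "sum (\<alpha>(j:=n)) UNIV = n + sum (\<alpha>(j:=n)) (UNIV - {j})" by (subst sum.remove) auto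
  have c: "sum (\<alpha>(j:=n)) (UNIV - {j}) = sum \<alpha> (UNIV - {j})" by (rule sum.cong) auto
  show ?thesis using a b c by simp
qed

lemma poly_fun_partial:
  assumes "poly_fun d p" shows "poly_fun (d - 1) (partial p j)"
proof -
  obtain coef where p: "\<And>z. p z = (\<Sum>\<alpha>\<in>{\<alpha>. sum \<alpha> UNIV \<le> d}. coef \<alpha> * mon \<alpha> z)"
    using poly_fun_E[OF assms] by blast
  define g where "g \<alpha> = (if \<alpha> j = 0 then (\<lambda>_. 0) else \<alpha>(j:=\<alpha> j - 1))" for \<alpha> :: "'a \<Rightarrow> nat"
  show ?thesis
  proof (rule poly_fun_lincomb[OF finite_deg, where g=g and c="\<lambda>\<alpha>. coef \<alpha> * of_nat (\<alpha> j)"])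
    show "\<forall>\<alpha>\<in>{\<alpha>. sum \<alpha> UNIV \<le> d}. sum (g \<alpha>) UNIV \<le> d - 1"
    proof
      fix \<alpha> :: "'a \<Rightarrow> nat" assume "\<alpha> \<in> {\<alpha>. sum \<alpha> UNIV \<le> d}"
      then show "sum (g \<alpha>) UNIV \<le> d - 1"
        using sum_upd[of \<alpha> j "\<alpha> j - 1"] unfolding g_def by auto
    qed
    fix z
    show "partial p j z = (\<Sum>\<alpha>\<in>{\<alpha>. sum \<alpha> UNIV \<le> d}. coef \<alpha> * of_nat (\<alpha> j) * mon (g \<alpha>) z)"
      unfolding poly_rep_partial[OF p] by (intro sum.cong refl) (simp add: g_def)
  qed
qed

lemma euler:
  assumes "hom_poly c p"
  shows "(\<Sum>j\<in>UNIV. z j * partial p j z) = of_nat c * p z"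
proof -
  obtain coef where p: "\<And>z. p z = (\<Sum>\<alpha>\<in>{\<alpha>. sum \<alpha> UNIV = c}. coef \<alpha> * mon \<alpha> z)"
    using hom_poly_E[OF assms] by blast
  have key: "z j * (of_nat (\<alpha> j) * mon (\<alpha>(j:=\<alpha> j - 1)) z) = of_nat (\<alpha> j) * mon \<alpha> z" for \<alpha> j
  proof (cases "\<alpha> j = 0")
    case False
    have "z j * z j ^ (\<alpha> j - 1) = z j ^ \<alpha> j"
      using False by (metis Suc_pred' neq0_conv power_Suc)
    then show ?thesis unfolding mon_upd2 mon_split[of \<alpha> z j] by (simp add: ac_simps)
  qed simp
  have "(\<Sum>j\<in>UNIV. z j * partial p j z)
      = (\<Sum>j\<in>UNIV. \<Sum>\<alpha>\<in>{\<alpha>. sum \<alpha> UNIV = c}. coef \<alpha> * (of_nat (\<alpha> j) * mon \<alpha> z))"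
    unfolding poly_rep_partial[OF p] sum_distrib_left
    by (intro sum.cong refl) (metis (no_types, lifting) key mult.left_commute)
  also have "\<dots> = (\<Sum>\<alpha>\<in>{\<alpha>. sum \<alpha> UNIV = c}. \<Sum>j\<in>UNIV. coef \<alpha> * mon \<alpha> z * of_nat (\<alpha> j))"
    by (subst sum.swap) (simp add: ac_simps)
  also have "\<dots> = (\<Sum>\<alpha>\<in>{\<alpha>. sum \<alpha> UNIV = c}. coef \<alpha> * mon \<alpha> z * of_nat c)"
    by (intro sum.cong refl) (simp add: sum_distrib_left[symmetric] of_nat_sum[symmetric])
  also have "\<dots> = of_nat c * p z" unfolding p by (simp add: sum_distrib_left ac_simps)
  finally show ?thesis .
qed



lemma sum_UNIV_Plus:
  "(\<Sum>k\<in>(UNIV::('n::finite + 'm::finite) set). f k) = (\<Sum>a\<in>UNIV. f (Inl a)) + (\<Sum>b\<in>UNIV. f (Inr b))"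
proof -
  have "(\<Sum>k\<in>(UNIV::('n + 'm) set). f k) = (\<Sum>k\<in>(UNIV <+> UNIV). f k)" by simp
  also have "\<dots> = (\<Sum>a\<in>UNIV. f (Inl a)) + (\<Sum>b\<in>UNIV. f (Inr b))"
    by (subst sum.Plus) (simp_all add: o_def)
  finally show ?thesis .
qed

lemma if_mult_one [simp]:
  "(if P then 1 else 0) * (x::'a::semiring_1) = (if P then x else 0)"
  "x * (if P then 1 else 0) = (if P then x else 0)"
  by simp_all

lemma schur_det:
  fixes M :: "'a::comm_ring_1^('n::finite+'m::finite)^('n+'m)"
  assumes M: "\<And>x y. M $ Inr x $ Inr y = (if y = x then 1 else 0)"
  shows "det M = det (\<chi> a i. M$Inl a$Inl i - (\<Sum>y\<in>UNIV. M$Inl a$Inr y * M$Inr y$Inl i))"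
proof -
  define N :: "'a^('n+'m)^('n+'m)" where
    "N = (\<chi> k l. case k of Inl a \<Rightarrow> (if l = Inl a then 1 else 0)
                | Inr x \<Rightarrow> (case l of Inl i \<Rightarrow> - M $ Inr x $ Inl i | Inr y \<Rightarrow> (if y = x then 1 else 0)))"
  have NIl: "N $ Inl a $ l = (if l = Inl a then 1 else 0)" for a l unfolding N_def by simp
  have NIrl: "N $ Inr x $ Inl i = - M $ Inr x $ Inl i" for x i unfolding N_def by simp
  have NIrr: "N $ Inr x $ Inr y = (if y = x then 1 else 0)" for x y unfolding N_def by simp
  have detN: "det N = 1"
  proof -
    have "det N = det (transpose N)" by simp
    also have "\<dots> = det (\<chi> a a'. transpose N $ Inl a $ Inl a')"
    proof (rule det_block)
      fix b k show "transpose N $ Inr b $ k = (if k = Inr b then 1 else 0)"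
        unfolding transpose_def by (cases k) (auto simp: NIl NIrr)
    qed
    also have "(\<chi> a a'. transpose N $ Inl a $ Inl a') = mat 1"
      unfolding transpose_def mat_def by (simp add: NIl)
    finally show ?thesis by simp
  qed
  have MN: "(M ** N) $ k $ l = (\<Sum>a\<in>UNIV. M $ k $ Inl a * N $ Inl a $ l) + (\<Sum>y\<in>UNIV. M $ k $ Inr y * N $ Inr y $ l)" for k l
    unfolding matrix_matrix_mult_def by (simp add: sum_UNIV_Plus)
  have "det M = det (M ** N)" by (simp add: det_mul detN)
  also have "\<dots> = det (\<chi> a a'. (M ** N) $ Inl a $ Inl a')"
  proof (rule det_block)
    fix b k show "(M ** N) $ Inr b $ k = (if k = Inr b then 1 else 0)"
    proof (cases k)
      case (Inl i)
      have "(\<Sum>a\<in>UNIV. M $ Inr b $ Inl a * N $ Inl a $ Inl i) = (\<Sum>a\<in>UNIV. if a = i then M $ Inr b $ Inl a else 0)"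
        by (rule sum.cong) (auto simp: NIl)
      then have "(\<Sum>a\<in>UNIV. M $ Inr b $ Inl a * N $ Inl a $ Inl i) = M $ Inr b $ Inl i"
        by simp
      moreover have "(\<Sum>y\<in>UNIV. M $ Inr b $ Inr y * N $ Inr y $ Inl i) = - M $ Inr b $ Inl i"
        by (simp add: M NIrl sum_negf)
      ultimately show ?thesis using Inl by (simp add: MN)
    next
      case (Inr y)
      have "(\<Sum>a\<in>UNIV. M $ Inr b $ Inl a * N $ Inl a $ Inr y) = 0"
        by (simp add: NIl)
      moreover have "(\<Sum>y'\<in>UNIV. M $ Inr b $ Inr y' * N $ Inr y' $ Inr y) = (if y = b then 1 else 0)"
        by (simp add: M NIrr)
      ultimately show ?thesis using Inr by (simp add: MN)
    qed
  qed
  also have "(\<chi> a a'. (M ** N) $ Inl a $ Inl a') = (\<chi> a i. M$Inl a$Inl i - (\<Sum>y\<in>UNIV. M$Inl a$Inr y * M$Inr y$Inl i))"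
  proof -
    have "(M ** N) $ Inl a $ Inl i = M$Inl a$Inl i - (\<Sum>y\<in>UNIV. M$Inl a$Inr y * M$Inr y$Inl i)" for a i
      unfolding MN by (simp add: NIl NIrl sum_negf)
    then show ?thesis by simp
  qed
  finally show ?thesis .
qed



lemma lin_deriv1:
  "((\<lambda>t. \<Sum>j\<in>A. c j * (if j = a then t else y j)) has_field_derivative (\<Sum>j\<in>A. if j = a then c j else 0)) (at t0)"
proof (rule DERIV_sum)
  fix j show "((\<lambda>t. c j * (if j = a then t else y j)) has_field_derivative (if j = a then c j else 0)) (at t0)"
    by (cases "j = a") (auto intro!: derivative_eq_intros)
qed

lemma lin_deriv2:
  "((\<lambda>t. \<Sum>j\<in>A. (if Q j then t else y j) * w j) has_field_derivative (\<Sum>j\<in>A. if Q j then w j else 0)) (at t0)"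
proof (rule DERIV_sum)
  fix j show "((\<lambda>t. (if Q j then t else y j) * w j) has_field_derivative (if Q j then w j else 0)) (at t0)"
    by (cases "Q j") (auto intro!: derivative_eq_intros)
qed

definition sF :: "nat \<Rightarrow> (nat \<Rightarrow> ('n::finite \<Rightarrow> complex) \<Rightarrow> ('n \<Rightarrow> complex)) \<Rightarrow> 'n \<Rightarrow> 'n \<Rightarrow> ('n \<Rightarrow> complex) \<Rightarrow> complex" where
  "sF d Fc i j x = (\<Sum>c\<in>{1..d+1}. (1 / of_nat c) * partial (\<lambda>x. Fc c x i) j x)"

lemma Ftilde_Inl: "Ftilde d Fc w (Inl i) = (\<Sum>j\<in>UNIV. w (Inr (i,j)) * w (Inl j))"
  by (simp add: Ftilde_def)

lemma Ftilde_Inr: "Ftilde d Fc w (Inr (i,j)) = w (Inr (i,j)) - sF d Fc i j (\<lambda>l. w (Inl l))"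
  by (simp add: Ftilde_def sF_def)

lemma Rinv_app: "Rinv d Fc z1 y2 (i,j) = y2 (i,j) + sF d Fc i j z1"
  by (simp add: Rinv_def sF_def)

lemma Rinv_app': "Rinv d Fc z1 y2 ij = y2 ij + sF d Fc (fst ij) (snd ij) z1"
  by (cases ij) (simp add: Rinv_app)

lemma blkR_app: "blk_R (Ftilde d Fc) z1 z2 ij = z2 ij - sF d Fc (fst ij) (snd ij) z1"
  by (cases ij) (simp add: blk_R_def Ftilde_Inr)

lemma sF_poly:
  assumes H: "\<forall>c\<in>{1..d+1}. \<forall>i. hom_poly c (\<lambda>z. Fc c z i)"
  shows "poly_fun d (sF d Fc i j)"
proof -
  have e: "sF d Fc i j = (\<lambda>x. \<Sum>c\<in>{1..d+1}. (1 / of_nat c) * partial (\<lambda>x. Fc c x i) j x)"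
    by (simp add: sF_def fun_eq_iff)
  show ?thesis unfolding e
  proof (rule poly_fun_sum, simp, rule ballI)
    fix c assume c: "c \<in> {1..d+1}"
    have "poly_fun (c - 1) (partial (\<lambda>x. Fc c x i) j)"
      using H c by (intro poly_fun_partial hom_poly_fun) auto
    then have "poly_fun d (partial (\<lambda>x. Fc c x i) j)"
      by (rule poly_fun_mono[rotated]) (use c in auto)
    then show "poly_fun d (\<lambda>x. 1 / of_nat c * partial (\<lambda>x. Fc c x i) j x)"
      by (rule poly_fun_scale)
  qed
qed

lemma sF_euler:
  assumes H: "\<forall>c\<in>{1..d+1}. \<forall>i. hom_poly c (\<lambda>z. Fc c z i)"
    and FF: "\<forall>z i. F z i = (\<Sum>c\<in>{1..d+1}. Fc c z i)"
  shows "(\<Sum>q\<in>UNIV. z q * sF d Fc i q z) = F z i"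
proof -
  have "(\<Sum>q\<in>UNIV. z q * sF d Fc i q z)
      = (\<Sum>c\<in>{1..d+1}. (1 / of_nat c) * (\<Sum>q\<in>UNIV. z q * partial (\<lambda>x. Fc c x i) q z))"
  proof -
    have "(\<Sum>q\<in>UNIV. z q * sF d Fc i q z) = (\<Sum>q\<in>UNIV. \<Sum>c\<in>{1..d+1}. (1 / of_nat c) * (z q * partial (\<lambda>x. Fc c x i) q z))"
      unfolding sF_def sum_distrib_left by (rule sum.cong[OF refl], rule sum.cong[OF refl]) (simp only: ac_simps)
    also have "\<dots> = (\<Sum>c\<in>{1..d+1}. \<Sum>q\<in>UNIV. (1 / of_nat c) * (z q * partial (\<lambda>x. Fc c x i) q z))"
      by (rule sum.swap)
    finally show ?thesis by (simp only: sum_distrib_left)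
  qed
  also have "\<dots> = (\<Sum>c\<in>{1..d+1}. (1 / of_nat c) * (of_nat c * Fc c z i))"
  proof (rule sum.cong[OF refl])
    fix c assume "c \<in> {1..d+1}"
    then have "hom_poly c (\<lambda>z. Fc c z i)" using H by blast
    from euler[OF this] show "(1 / of_nat c) * (\<Sum>q\<in>UNIV. z q * partial (\<lambda>x. Fc c x i) q z)
       = (1 / of_nat c) * (of_nat c * Fc c z i)" by simp
  qed
  also have "\<dots> = (\<Sum>c\<in>{1..d+1}. Fc c z i)"
  proof (rule sum.cong[OF refl])
    fix c :: nat assume "c \<in> {1..d+1}"
    then have "(of_nat c :: complex) \<noteq> 0" by simp
    then show "(1 / of_nat c) * (of_nat c * Fc c z i) = Fc c z i" by (simp add: field_simps)
  qed
  finally show ?thesis using FF by simp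
qed

lemma poly_map_Ftilde:
  fixes Fc :: "nat \<Rightarrow> ('n::finite \<Rightarrow> complex) \<Rightarrow> ('n \<Rightarrow> complex)"
  assumes H: "\<forall>c\<in>{1..d+1}. \<forall>i. hom_poly c (\<lambda>z. Fc c z i)" and d: "d \<ge> 2"
  shows "poly_map d (Ftilde d Fc)"
  unfolding poly_map_def
proof
  fix k :: "'n + 'n \<times> 'n"
  show "poly_fun d (\<lambda>z. Ftilde d Fc z k)"
  proof (cases k)
    case (Inl i)
    have "poly_fun d (\<lambda>z::'n + 'n \<times> 'n \<Rightarrow> complex. z (Inr (i,j)) * z (Inl j))" for j
    proof (rule poly_fun_mono)
      show "poly_fun (1 + 1) (\<lambda>z::'n + 'n \<times> 'n \<Rightarrow> complex. z (Inr (i,j)) * z (Inl j))"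
        by (intro poly_fun_mult poly_fun_var)
    qed (use d in simp)
    then show ?thesis unfolding Inl Ftilde_Inl by (intro poly_fun_sum) simp_all
  next
    case (Inr ij)
    obtain i j where ij: "ij = (i,j)" by (cases ij)
    have v: "poly_fun d (\<lambda>z::'n + 'n \<times> 'n \<Rightarrow> complex. z (Inr (i,j)))"
      by (rule poly_fun_mono[OF _ poly_fun_var]) (use d in simp)
    have "poly_fun (d * 1) (\<lambda>z::'n + 'n \<times> 'n \<Rightarrow> complex. sF d Fc i j (\<lambda>l. z (Inl l)))"
      by (rule poly_fun_compose[OF sF_poly[OF H]]) (intro allI poly_fun_var)
    then have "poly_fun d (\<lambda>z::'n + 'n \<times> 'n \<Rightarrow> complex. sF d Fc i j (\<lambda>l. z (Inl l)))" by simp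
    then show ?thesis unfolding Inr ij Ftilde_Inr using v by (intro poly_fun_diff)
  qed
qed



lemma sum_pair_delta:
  "(\<Sum>y\<in>(UNIV::('n::finite\<times>'n) set). f y * (if fst y = i then g (snd y) else 0)) = (\<Sum>q\<in>UNIV. f (i,q) * (g q :: 'a::comm_ring_1))"
proof -
  have "(\<Sum>y\<in>(UNIV::('n\<times>'n) set). f y * (if fst y = i then g (snd y) else 0))
      = (\<Sum>y\<in>UNIV \<times> UNIV. f y * (if fst y = i then g (snd y) else 0))" by simp
  also have "\<dots> = (\<Sum>p\<in>UNIV. \<Sum>q\<in>UNIV. f (p,q) * (if p = i then g q else 0))"
    by (subst sum.cartesian_product) (simp add: split_def)
  also have "\<dots> = (\<Sum>p\<in>UNIV. if p = i then (\<Sum>q\<in>UNIV. f (p,q) * g q) else 0)"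
    by (rule sum.cong) auto
  also have "\<dots> = (\<Sum>q\<in>UNIV. f (i,q) * g q)" by simp
  finally show ?thesis .
qed

abbreviation PP :: "nat \<Rightarrow> (nat \<Rightarrow> ('n::finite \<Rightarrow> complex) \<Rightarrow> ('n \<Rightarrow> complex)) \<Rightarrow> ('n \<Rightarrow> complex) \<Rightarrow> ('n + 'n \<times> 'n \<Rightarrow> complex)" where
  "PP d Fc z1 \<equiv> case_sum z1 (Rinv d Fc z1 (\<lambda>_. 0))"

lemma PP_Inl [simp]: "PP d Fc z1 (Inl j) = z1 j" by simp
lemma PP_Inr [simp]: "PP d Fc z1 (Inr (i,j)) = sF d Fc i j z1" by (simp add: Rinv_app)

lemma jacFt_LL: "jac (Ftilde d Fc) (PP d Fc z1) $ Inl a $ Inl i = sF d Fc i a z1"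
proof -
  have e: "(\<lambda>t. Ftilde d Fc ((PP d Fc z1)(Inl a := t)) (Inl i))
         = (\<lambda>t. \<Sum>j\<in>UNIV. sF d Fc i j z1 * (if j = a then t else z1 j))"
    by (rule ext) (simp add: Ftilde_Inl Rinv_app cong: if_cong)
  have "partial (\<lambda>w. Ftilde d Fc w (Inl i)) (Inl a) (PP d Fc z1) = (\<Sum>j\<in>UNIV. if j = a then sF d Fc i j z1 else 0)"
    by (rule partial_eqI) (unfold e, rule lin_deriv1)
  then show ?thesis by (simp add: jac_def)
qed

lemma jacFt_RL: "jac (Ftilde d Fc) (PP d Fc z1) $ Inr y $ Inl i = (if fst y = i then z1 (snd y) else 0)"
proof -
  obtain p q where y: "y = (p,q)" by (cases y)
  have e: "(\<lambda>t. Ftilde d Fc ((PP d Fc z1)(Inr y := t)) (Inl i))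
         = (\<lambda>t. \<Sum>j\<in>UNIV. (if (i,j) = y then t else sF d Fc i j z1) * z1 j)"
    by (rule ext) (simp add: Ftilde_Inl Rinv_app cong: if_cong)
  have "partial (\<lambda>w. Ftilde d Fc w (Inl i)) (Inr y) (PP d Fc z1) = (\<Sum>j\<in>UNIV. if (i,j) = y then z1 j else 0)"
    by (rule partial_eqI) (unfold e, rule lin_deriv2)
  also have "\<dots> = (if fst y = i then z1 (snd y) else 0)"
    unfolding y by (cases "p = i") auto
  finally show ?thesis by (simp add: jac_def)
qed

lemma jacFt_LR:
  assumes H: "\<forall>c\<in>{1..d+1}. \<forall>i. hom_poly c (\<lambda>z. Fc c z i)"
  shows "jac (Ftilde d Fc) (PP d Fc z1) $ Inl a $ Inr y = - partial (sF d Fc (fst y) (snd y)) a z1"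
proof -
  obtain i j where y: "y = (i,j)" by (cases y)
  have r: "(\<lambda>l. ((PP d Fc z1)(Inl a := t)) (Inl l)) = z1(a:=t)" for t by (rule ext) (simp cong: if_cong)
  have e: "(\<lambda>t. Ftilde d Fc ((PP d Fc z1)(Inl a := t)) (Inr y))
         = (\<lambda>t. sF d Fc i j z1 - sF d Fc i j (z1(a:=t)))"
    by (rule ext) (simp add: y Ftilde_Inr Rinv_app fun_upd_def cong: if_cong)
  have "((\<lambda>t. sF d Fc i j z1 - sF d Fc i j (z1(a:=t))) has_field_derivative
          0 - partial (sF d Fc i j) a (z1(a:=z1 a))) (at (z1 a))"
    by (intro DERIV_diff DERIV_const poly_fun_deriv[OF sF_poly[OF H]])
  then have "partial (\<lambda>w. Ftilde d Fc w (Inr y)) (Inl a) (PP d Fc z1) = - partial (sF d Fc i j) a z1"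
    by (intro partial_eqI) (simp add: e)
  then show ?thesis by (simp add: jac_def y)
qed

lemma jacFt_RR: "jac (Ftilde d Fc) (PP d Fc z1) $ Inr x $ Inr y = (if y = x then 1 else 0)"
proof -
  obtain i j where y: "y = (i,j)" by (cases y)
  have e: "(\<lambda>t. Ftilde d Fc ((PP d Fc z1)(Inr x := t)) (Inr y))
         = (\<lambda>t. (if y = x then t else sF d Fc i j z1) - sF d Fc i j z1)"
    by (rule ext) (simp add: y Ftilde_Inr Rinv_app)
  have "((\<lambda>t. (if y = x then t else sF d Fc i j z1) - sF d Fc i j z1) has_field_derivative
          (if y = x then 1 else 0)) (at t0)" for t0
    by (cases "y = x") (auto intro!: derivative_eq_intros)
  then have "partial (\<lambda>w. Ftilde d Fc w (Inr y)) (Inr x) (PP d Fc z1) = (if y = x then 1 else 0)"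
    by (intro partial_eqI) (simp add: e)
  then show ?thesis by (simp add: jac_def)
qed

lemma jacF:
  assumes H: "\<forall>c\<in>{1..d+1}. \<forall>i. hom_poly c (\<lambda>z. Fc c z i)"
    and FF: "\<forall>z i. F z i = (\<Sum>c\<in>{1..d+1}. Fc c z i)"
  shows "jac F z1 $ a $ i = sF d Fc i a z1 + (\<Sum>q\<in>UNIV. z1 q * partial (sF d Fc i q) a z1)"
proof -
  have e: "(\<lambda>t. F (z1(a:=t)) i) = (\<lambda>t. \<Sum>q\<in>UNIV. (z1(a:=t)) q * sF d Fc i q (z1(a:=t)))"
    by (rule ext) (rule sF_euler[OF H FF, symmetric])
  have dq: "((\<lambda>t. (z1(a:=t)) q * sF d Fc i q (z1(a:=t))) has_field_derivative
       (if q = a then 1 else 0) * sF d Fc i q (z1(a:=z1 a)) + partial (sF d Fc i q) a (z1(a:=z1 a)) * (z1(a:=z1 a)) q) (at (z1 a))" for q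
  proof (rule DERIV_mult)
    show "((\<lambda>t. (z1(a:=t)) q) has_field_derivative (if q = a then 1 else 0)) (at (z1 a))"
      by (cases "q = a") (auto intro!: derivative_eq_intros)
    show "((\<lambda>t. sF d Fc i q (z1(a:=t))) has_field_derivative partial (sF d Fc i q) a (z1(a:=z1 a))) (at (z1 a))"
      by (rule poly_fun_deriv[OF sF_poly[OF H]])
  qed
  have "((\<lambda>t. F (z1(a:=t)) i) has_field_derivative
        (\<Sum>q\<in>UNIV. (if q = a then 1 else 0) * sF d Fc i q z1 + partial (sF d Fc i q) a z1 * z1 q)) (at (z1 a))"
    unfolding e using DERIV_sum[OF dq] by simp
  then have "partial (\<lambda>w. F w i) a z1 = (\<Sum>q\<in>UNIV. (if q = a then 1 else 0) * sF d Fc i q z1 + partial (sF d Fc i q) a z1 * z1 q)"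
    by (rule partial_eqI)
  also have "\<dots> = sF d Fc i a z1 + (\<Sum>q\<in>UNIV. z1 q * partial (sF d Fc i q) a z1)"
    by (simp add: sum.distrib ac_simps)
  finally show ?thesis by (simp add: jac_def)
qed

lemma jac_det_eq:
  assumes H: "\<forall>c\<in>{1..d+1}. \<forall>i. hom_poly c (\<lambda>z. Fc c z i)"
    and FF: "\<forall>z i. F z i = (\<Sum>c\<in>{1..d+1}. Fc c z i)"
  shows "jac_det (Ftilde d Fc) (PP d Fc z1) = jac_det F z1"
proof -
  let ?M = "jac (Ftilde d Fc) (PP d Fc z1)"
  have "jac_det (Ftilde d Fc) (PP d Fc z1)
      = det (\<chi> a i. ?M$Inl a$Inl i - (\<Sum>y\<in>UNIV. ?M$Inl a$Inr y * ?M$Inr y$Inl i))"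
    unfolding jac_det_def by (rule schur_det) (rule jacFt_RR)
  also have "(\<chi> a i. ?M$Inl a$Inl i - (\<Sum>y\<in>UNIV. ?M$Inl a$Inr y * ?M$Inr y$Inl i)) = jac F z1"
  proof -
    have "?M$Inl a$Inl i - (\<Sum>y\<in>UNIV. ?M$Inl a$Inr y * ?M$Inr y$Inl i) = jac F z1 $ a $ i" for a i
    proof -
      have "(\<Sum>y\<in>UNIV. ?M$Inl a$Inr y * ?M$Inr y$Inl i)
          = (\<Sum>y\<in>UNIV. (- partial (sF d Fc (fst y) (snd y)) a z1) * (if fst y = i then z1 (snd y) else 0))"
        by (simp only: jacFt_LR[OF H] jacFt_RL)
      also have "\<dots> = (\<Sum>q\<in>UNIV. (- partial (sF d Fc i q) a z1) * z1 q)"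
        using sum_pair_delta[where f="\<lambda>y. - partial (sF d Fc (fst y) (snd y)) a z1" and i=i and g=z1] by simp
      finally show ?thesis
        by (simp add: jacFt_LL jacF[OF H FF] sum_negf ac_simps)
    qed
    then show ?thesis by (simp add: vec_eq_iff)
  qed
  finally show ?thesis by (simp add: jac_det_def)
qed



lemma blkR_inv: "inv (blk_R (Ftilde d Fc) z1) = Rinv d Fc z1"
  and blkR_bij: "bij (blk_R (Ftilde d Fc) z1)"
proof -
  have a: "Rinv d Fc z1 (blk_R (Ftilde d Fc) z1 z2) = z2" for z2
    by (rule ext) (simp add: blkR_app Rinv_app')
  have b: "blk_R (Ftilde d Fc) z1 (Rinv d Fc z1 y2) = y2" for y2
    by (rule ext) (simp add: blkR_app Rinv_app')
  show "inv (blk_R (Ftilde d Fc) z1) = Rinv d Fc z1" by (rule inv_equality) (use a b in auto)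
  show "bij (blk_R (Ftilde d Fc) z1)" by (rule o_bij[of "Rinv d Fc z1"]) (use a b in auto)
qed

lemma isJ_blkR: "isJ (blk_R (Ftilde d Fc) z1)"
  unfolding isJ_def
proof (intro conjI)
  show "polynomial_map (blk_R (Ftilde d Fc) z1)"
    unfolding polynomial_map_def poly_map_def blkR_app
    by (intro exI[of _ 1] allI poly_fun_diff poly_fun_var poly_fun_const)
  show "bij (blk_R (Ftilde d Fc) z1)" by (rule blkR_bij)
  show "polynomial_map (inv (blk_R (Ftilde d Fc) z1))"
    unfolding blkR_inv polynomial_map_def poly_map_def Rinv_app'
    by (intro exI[of _ 1] allI poly_fun_add poly_fun_var poly_fun_const)
qed

lemma Ft_PP:
  assumes H: "\<forall>c\<in>{1..d+1}. \<forall>i. hom_poly c (\<lambda>z. Fc c z i)"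
    and FF: "\<forall>z i. F z i = (\<Sum>c\<in>{1..d+1}. Fc c z i)"
  shows "Ftilde d Fc (PP d Fc z1) = case_sum (F z1) (\<lambda>_. 0)"
proof
  fix k show "Ftilde d Fc (PP d Fc z1) k = case_sum (F z1) (\<lambda>_. 0) k"
  proof (cases k)
    case (Inl i)
    have "Ftilde d Fc (PP d Fc z1) (Inl i) = (\<Sum>q\<in>UNIV. z1 q * sF d Fc i q z1)"
      by (simp add: Ftilde_Inl Rinv_app ac_simps)
    then show ?thesis using Inl sF_euler[OF H FF] by simp
  next
    case (Inr ij)
    then show ?thesis by (cases ij) (simp add: Ftilde_Inr Rinv_app)
  qed
qed

lemma Ft_pre:
  "(\<forall>b. Ftilde d Fc w (Inr b) = 0) \<longleftrightarrow> w = PP d Fc (\<lambda>l. w (Inl l))"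
proof
  assume a: "\<forall>b. Ftilde d Fc w (Inr b) = 0"
  show "w = PP d Fc (\<lambda>l. w (Inl l))"
  proof
    fix k show "w k = PP d Fc (\<lambda>l. w (Inl l)) k"
    proof (cases k)
      case (Inr ij)
      obtain i j where ij: "ij = (i,j)" by (cases ij)
      show ?thesis using a[rule_format, of ij] unfolding Inr ij by (simp add: Ftilde_Inr Rinv_app)
    qed simp
  qed
next
  assume "w = PP d Fc (\<lambda>l. w (Inl l))"
  then have "w (Inr (i,j)) = sF d Fc i j (\<lambda>l. w (Inl l))" for i j
    by (metis PP_Inr)
  then show "\<forall>b. Ftilde d Fc w (Inr b) = 0" by (auto simp: Ftilde_Inr)
qed



theorem mainTheorem4:
  fixes F :: "('n::finite \<Rightarrow> complex) \<Rightarrow> ('n \<Rightarrow> complex)"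
    and Fc :: "nat \<Rightarrow> ('n \<Rightarrow> complex) \<Rightarrow> ('n \<Rightarrow> complex)"
    and d :: nat
  assumes "d \<ge> 2"
    and "poly_map (d + 1) F"
    and "F (\<lambda>_. 0) = (\<lambda>_. 0)"
    and "\<forall>c\<in>{1..d+1}. \<forall>i. hom_poly c (\<lambda>z. Fc c z i)"
    and "\<forall>z i. F z i = (\<Sum>c\<in>{1..d+1}. Fc c z i)"
  shows "poly_map d (Ftilde d Fc)
    \<and> (\<forall>z1. (\<exists>v. \<forall>z2 ij. blk_R (Ftilde d Fc) z1 z2 ij = z2 ij + v ij)
           \<and> (\<forall>y2. blk_R (Ftilde d Fc) z1 (Rinv d Fc z1 y2) = y2)
           \<and> (\<forall>z2. Rinv d Fc z1 (blk_R (Ftilde d Fc) z1 z2) = z2))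
    \<and> (\<forall>z1 i. Ftilde d Fc (case_sum z1 (Rinv d Fc z1 (\<lambda>_. 0))) (Inl i) = F z1 i)
    \<and> (isJlin F \<longleftrightarrow> isJlin_blk d (Ftilde d Fc))
    \<and> (isJ F \<longleftrightarrow> isJ_blk d (Ftilde d Fc))"
proof -
  note d = assms(1) and polyF = assms(2) and H = assms(4) and FF = assms(5)
  let ?G = "Ftilde d Fc"
  have pm: "poly_map d ?G" by (rule poly_map_Ftilde[OF H d])
  have part2: "(\<exists>v. \<forall>z2 ij. blk_R ?G z1 z2 ij = z2 ij + v ij)
           \<and> (\<forall>y2. blk_R ?G z1 (Rinv d Fc z1 y2) = y2)
           \<and> (\<forall>z2. Rinv d Fc z1 (blk_R ?G z1 z2) = z2)" for z1
  proof (intro conjI allI)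
    show "\<exists>v. \<forall>z2 ij. blk_R ?G z1 z2 ij = z2 ij + v ij"
      by (rule exI[of _ "\<lambda>ij. - sF d Fc (fst ij) (snd ij) z1"]) (simp add: blkR_app)
    show "blk_R ?G z1 (Rinv d Fc z1 y2) = y2" for y2
      by (rule ext) (simp add: blkR_app Rinv_app')
    show "Rinv d Fc z1 (blk_R ?G z1 z2) = z2" for z2
      by (rule ext) (simp add: blkR_app Rinv_app')
  qed
  have part3: "?G (PP d Fc z1) (Inl i) = F z1 i" for z1 i
    using Ft_PP[OF H FF, of z1] by simp
  have polF: "polynomial_map F" using polyF unfolding polynomial_map_def by blast
  have invP: "case_sum z1 (inv (blk_R ?G z1) (\<lambda>_. 0)) = PP d Fc z1" for z1
    by (simp add: blkR_inv)
  have part4: "isJlin F \<longleftrightarrow> isJlin_blk d ?G"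
    unfolding isJlin_def isJlin_blk_def invP jac_det_eq[OF H FF]
    using pm polF isJ_blkR by blast
  have part5: "isJ F \<longleftrightarrow> isJ_blk d ?G"
  proof -
    define S :: "('n + 'n \<times> 'n \<Rightarrow> complex) set" where "S = {y. \<forall>b. y (Inr b) = 0}"
    have pre: "w \<in> ?G -` S \<longleftrightarrow> w = PP d Fc (\<lambda>l. w (Inl l))" for w
      by (simp only: S_def vimage_eq mem_Collect_eq Ft_pre)
    have GP: "?G (PP d Fc z) = case_sum (F z) (\<lambda>_. 0)" for z by (rule Ft_PP[OF H FF])
    have PPin: "PP d Fc z \<in> ?G -` S" for z unfolding S_def by (simp add: GP)
    have PPinj: "PP d Fc z = PP d Fc z' \<Longrightarrow> z = z'" for z z'
      by (metis PP_Inl ext)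
    have "isJ_blk d ?G \<longleftrightarrow> bij_betw ?G (?G -` S) S \<and>
       (\<exists>H :: ('n \<Rightarrow> complex) \<Rightarrow> ('n + 'n \<times> 'n \<Rightarrow> complex). polynomial_map H \<and>
          (\<forall>y1. ?G (H y1) = case_sum y1 (\<lambda>_. 0)))"
      unfolding isJ_blk_def S_def Let_def using pm isJ_blkR by blast
    also have "\<dots> \<longleftrightarrow> isJ F"
    proof
      assume a: "bij_betw ?G (?G -` S) S \<and>
       (\<exists>H :: ('n \<Rightarrow> complex) \<Rightarrow> ('n + 'n \<times> 'n \<Rightarrow> complex). polynomial_map H \<and>
          (\<forall>y1. ?G (H y1) = case_sum y1 (\<lambda>_. 0)))"
      then obtain Hm :: "('n \<Rightarrow> complex) \<Rightarrow> ('n + 'n \<times> 'n \<Rightarrow> complex)" where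
        Hp: "polynomial_map Hm" and HG: "\<And>y1. ?G (Hm y1) = case_sum y1 (\<lambda>_. 0)" by blast
      have injG: "inj_on ?G (?G -` S)" using a bij_betw_def by blast
      have injF: "inj F"
      proof (rule injI)
        fix x x' assume "F x = F x'"
        then have "?G (PP d Fc x) = ?G (PP d Fc x')" by (simp add: GP)
        then have "PP d Fc x = PP d Fc x'" by (rule inj_onD[OF injG _ PPin PPin])
        then show "x = x'" by (rule PPinj)
      qed
      have FH: "F (\<lambda>l. Hm y1 (Inl l)) = y1" for y1
      proof -
        have "Hm y1 \<in> ?G -` S" unfolding S_def by (simp add: HG)
        then have h: "Hm y1 = PP d Fc (\<lambda>l. Hm y1 (Inl l))" using pre by blast
        have "?G (PP d Fc (\<lambda>l. Hm y1 (Inl l))) = case_sum y1 (\<lambda>_. 0)"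
          by (subst h[symmetric]) (rule HG)
        then have "case_sum (F (\<lambda>l. Hm y1 (Inl l))) (\<lambda>_. 0) = (case_sum y1 (\<lambda>_. 0) :: 'n + 'n \<times> 'n \<Rightarrow> complex)"
          by (simp add: GP)
        show ?thesis
        proof
          fix l from fun_cong[OF \<open>case_sum (F (\<lambda>l. Hm y1 (Inl l))) (\<lambda>_. 0) = _\<close>, of "Inl l"]
          show "F (\<lambda>l. Hm y1 (Inl l)) l = y1 l" by simp
        qed
      qed
      have surjF: "surj F" by (rule surjI[of F "\<lambda>y1 l. Hm y1 (Inl l)"]) (rule FH)
      have invF: "inv F = (\<lambda>y1. \<lambda>l. Hm y1 (Inl l))"
      proof
        fix y1 show "inv F y1 = (\<lambda>l. Hm y1 (Inl l))"
          using inv_f_f[OF injF, of "\<lambda>l. Hm y1 (Inl l)"] FH[of y1] by simp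
      qed
      obtain e where e: "poly_map e Hm" using Hp unfolding polynomial_map_def by blast
      have "polynomial_map (inv F)"
        unfolding polynomial_map_def invF
        by (rule exI[of _ e]) (use e in \<open>simp add: poly_map_def\<close>)
      then show "isJ F" unfolding isJ_def bij_def using polF injF surjF by blast
    next
      assume a: "isJ F"
      then have bF: "bij F" and pinv: "polynomial_map (inv F)" unfolding isJ_def by auto
      have injF: "inj F" and surjF: "surj F" using bF by (simp_all add: bij_is_inj bij_is_surj)
      have bb: "bij_betw ?G (?G -` S) S"
        unfolding bij_betw_def
      proof
        show "inj_on ?G (?G -` S)"
        proof (rule inj_onI)
          fix w w' assume w: "w \<in> ?G -` S" and w': "w' \<in> ?G -` S" and eq: "?G w = ?G w'"
          have w1: "w = PP d Fc (\<lambda>l. w (Inl l))" using w pre by blast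
          have w2: "w' = PP d Fc (\<lambda>l. w' (Inl l))" using w' pre by blast
          have g1: "?G w = ?G (PP d Fc (\<lambda>l. w (Inl l)))" using w1 by (rule arg_cong)
          have g2: "?G w' = ?G (PP d Fc (\<lambda>l. w' (Inl l)))" using w2 by (rule arg_cong)
          have cs: "case_sum (F (\<lambda>l. w (Inl l))) (\<lambda>_. 0) = (case_sum (F (\<lambda>l. w' (Inl l))) (\<lambda>_. 0) :: 'n + 'n \<times> 'n \<Rightarrow> complex)"
            using eq g1 g2 GP by simp
          have "F (\<lambda>l. w (Inl l)) = F (\<lambda>l. w' (Inl l))"
          proof
            fix l from fun_cong[OF cs, of "Inl l"]
            show "F (\<lambda>l. w (Inl l)) l = F (\<lambda>l. w' (Inl l)) l" by simp
          qed
          then have e1: "(\<lambda>l. w (Inl l)) = (\<lambda>l. w' (Inl l))" by (rule injD[OF injF])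
          have "PP d Fc (\<lambda>l. w (Inl l)) = PP d Fc (\<lambda>l. w' (Inl l))" by (simp only: e1)
          then show "w = w'" using w1 w2 by simp
        qed
        show "?G ` (?G -` S) = S"
        proof
          show "?G ` (?G -` S) \<subseteq> S" by blast
          show "S \<subseteq> ?G ` (?G -` S)"
          proof
            fix y assume y: "y \<in> S"
            define z where "z = inv F (\<lambda>i. y (Inl i))"
            have "?G (PP d Fc z) = y"
            proof
              fix k show "?G (PP d Fc z) k = y k"
                using y unfolding GP z_def S_def mem_Collect_eq
                by (cases k) (simp_all add: surj_f_inv_f[OF surjF] del: split_paired_All)
            qed
            then show "y \<in> ?G ` (?G -` S)" by (rule image_eqI[OF sym PPin])
          qed
        qed
      qed
      obtain e where e: "poly_map e (inv F)" using pinv unfolding polynomial_map_def by blast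
      define Hm where "Hm y1 = PP d Fc (inv F y1)" for y1
      have "poly_map (e * (d + 1)) Hm"
        unfolding poly_map_def
      proof
        fix k :: "'n + 'n \<times> 'n"
        show "poly_fun (e * (d + 1)) (\<lambda>z. Hm z k)"
        proof (cases k)
          case (Inl i)
          have "poly_fun e (\<lambda>z. inv F z i)" using e unfolding poly_map_def by blast
          moreover have "(\<lambda>z. Hm z k) = (\<lambda>z. inv F z i)" by (simp add: Hm_def Inl)
          ultimately show ?thesis using poly_fun_mono[of e "e * (d + 1)"] by simp
        next
          case (Inr ij)
          obtain i j where ij: "ij = (i,j)" by (cases ij)
          have "poly_fun (d * e) (\<lambda>z. sF d Fc i j (\<lambda>l. inv F z l))"
            by (rule poly_fun_compose[OF sF_poly[OF H]]) (use e in \<open>simp add: poly_map_def\<close>)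
          moreover have "(\<lambda>z. Hm z k) = (\<lambda>z. sF d Fc i j (\<lambda>l. inv F z l))"
            by (simp add: Hm_def Inr ij Rinv_app)
          moreover have "d * e \<le> e * (d + 1)" by simp
          ultimately show ?thesis using poly_fun_mono by metis
        qed
      qed
      then have "polynomial_map Hm" unfolding polynomial_map_def by blast
      moreover have "?G (Hm y1) = case_sum y1 (\<lambda>_. 0)" for y1
        unfolding Hm_def GP by (simp add: surj_f_inv_f[OF surjF])
      ultimately show "bij_betw ?G (?G -` S) S \<and>
       (\<exists>H :: ('n \<Rightarrow> complex) \<Rightarrow> ('n + 'n \<times> 'n \<Rightarrow> complex). polynomial_map H \<and>
          (\<forall>y1. ?G (H y1) = case_sum y1 (\<lambda>_. 0)))" using bb by blast
    qed
    finally show ?thesis by simp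
  qed
  show ?thesis using pm part2 part3 part4 part5 by blast
qed

end
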